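(* There is an absolute constant $C$ such that for every $n$ and every matroid $M$ on ground set $[n]$ of rank $2$, $R^{lin}_{1/3}(rank_M)\le C$.
   Context: A matroid $M=([n],\mathcal I)$ has rank function $rank_M(S)=\max\{|I|: I\subseteq S, I\in\mathcal I\}$; we view it as a function on $\mathbb F_2^n$ by identifying $x$ with $\{i:x_i=1\}$. For $S\subseteq[n]$, $\chi_S(x)=\sum_{i\in S}x_i\pmod 2$. Exact randomized $\mathbb F_2$-sketch complexity: for $f\colon\mathbb F_2^n\to\mathbb R$ and $\delta\in[0,1]$, $R^{lin}_\delta(f)$ is the smallest integer $k$ such that there exists a probability distribution over $k$-tuples of subsets $\mathbf S_1,\dots,\mathbf S_k\subseteq[n]$ and a function $g\colon\mathbb F_2^k\to\mathbb R$ with $\Pr_{\mathbf S_1,\dots,\mathbf S_k}[g(\chi_{\mathbf S_1}(x),\dots,\chi_{\mathbf S_k}(x))=f(x)]\ge1-\delta$ for every $x\in\mathbb F_2^n$. *)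

theory Defs
  imports "HOL-Probability.Probability"
begin

definition matroid :: "nat \<Rightarrow> nat set set \<Rightarrow> bool" where
  "matroid n \<I> \<longleftrightarrow>
     (\<forall>I\<in>\<I>. I \<subseteq> {1..n}) \<and>
     {} \<in> \<I> \<and>
     (\<forall>I J. J \<in> \<I> \<longrightarrow> I \<subseteq> J \<longrightarrow> I \<in> \<I>) \<and>
     (\<forall>I J. I \<in> \<I> \<longrightarrow> J \<in> \<I> \<longrightarrow> card I < card J \<longrightarrow>
        (\<exists>x\<in>J - I. insert x I \<in> \<I>))"

text \<open>Rank function: rank(S) = max{|I| : I \<subseteq> S, I independent}.
  A vector x in F_2^n is identified with the set {i : x_i = 1} \<subseteq> [n].\<close>
definition mrank :: "nat set set \<Rightarrow> nat set \<Rightarrow> nat" where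
  "mrank \<I> S = Max (card ` {I \<in> \<I>. I \<subseteq> S})"

text \<open>Parity chi_S(x) = sum_{i in S} x_i mod 2 (True = 1), with x identified with X.\<close>
definition chi :: "nat set \<Rightarrow> nat set \<Rightarrow> bool" where
  "chi S X = odd (card (S \<inter> X))"

definition has_sketch :: "nat \<Rightarrow> real \<Rightarrow> (nat set \<Rightarrow> real) \<Rightarrow> nat \<Rightarrow> bool" where
  "has_sketch n \<delta> f k \<longleftrightarrow>
     (\<exists>(D :: nat set list pmf) (g :: bool list \<Rightarrow> real).
        (\<forall>Ss\<in>set_pmf D. length Ss = k \<and> (\<forall>S\<in>set Ss. S \<subseteq> {1..n})) \<and>
        (\<forall>X. X \<subseteq> {1..n} \<longrightarrow>
           measure_pmf.prob D {Ss. g (map (\<lambda>S. chi S X) Ss) = f X} \<ge> 1 - \<delta>))"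

definition sketch_complexity :: "nat \<Rightarrow> real \<Rightarrow> (nat set \<Rightarrow> real) \<Rightarrow> nat" where
  "sketch_complexity n \<delta> f = (LEAST k. has_sketch n \<delta> f k)"

end

theory Submission
  imports Defs
begin

definition tog :: "'a \<Rightarrow> 'a set \<Rightarrow> 'a set" where
  "tog x T = (if x \<in> T then T - {x} else insert x T)"

lemma tog_tog[simp]: "tog x (tog x T) = T"
  unfolding tog_def by auto

lemma tog_sub: "T \<subseteq> U \<Longrightarrow> x \<in> U \<Longrightarrow> tog x T \<subseteq> U"
  unfolding tog_def by auto

lemma tog_half:
  assumes fin: "finite U" and x: "x \<in> U"
    and Q: "\<And>T. T \<subseteq> U \<Longrightarrow> Q (tog x T) = Q T"
    and P: "\<And>T. T \<subseteq> U \<Longrightarrow> P (tog x T) = (\<not> P T)"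
  shows "2 * card {T\<in>Pow U. Q T \<and> P T} = card {T \<in> Pow U. Q T}"
proof -
  let ?A = "{T\<in>Pow U. Q T \<and> P T}" and ?B = "{T\<in>Pow U. Q T \<and> \<not> P T}"
  have sub: "\<And>T. T \<subseteq> U \<Longrightarrow> tog x T \<subseteq> U" using tog_sub x by metis
  have "bij_betw (tog x) ?A ?B"
  proof (rule bij_betw_byWitness[where f'="tog x"])
    show "tog x ` ?A \<subseteq> ?B"
    proof
      fix y assume "y \<in> tog x ` ?A"
      then obtain T where T: "T \<in> ?A" "y = tog x T" by blast
      thus "y \<in> ?B" using sub[of T] Q[of T] P[of T] by auto
    qed
    show "tog x ` ?B \<subseteq> ?A"
    proof
      fix y assume "y \<in> tog x ` ?B"
      then obtain T where T: "T \<in> ?B" "y = tog x T" by blast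
      thus "y \<in> ?A" using sub[of T] Q[of T] P[of T] by auto
    qed
  qed auto
  hence e: "card ?A = card ?B" by (rule bij_betw_same_card)
  have "{T \<in> Pow U. Q T} = ?A \<union> ?B" by auto
  moreover have "card (?A \<union> ?B) = card ?A + card ?B"
    by (rule card_Un_disjoint) (use fin in auto)
  ultimately show ?thesis using e by simp
qed

lemma odd_tog_in:
  assumes "finite A" "x \<in> A"
  shows "odd (card (tog x S \<inter> A)) = (\<not> odd (card (S \<inter> A)))"
proof (cases "x \<in> S")
  case True
  hence "tog x S \<inter> A = (S \<inter> A) - {x}" unfolding tog_def by auto
  moreover have "Suc (card ((S \<inter> A) - {x})) = card (S \<inter> A)"
    using True assms by (intro card_Suc_Diff1) auto
  ultimately show ?thesis by (metis even_Suc)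
next
  case False
  hence "tog x S \<inter> A = insert x (S \<inter> A)" unfolding tog_def using assms by auto
  moreover have "card (insert x (S \<inter> A)) = Suc (card (S \<inter> A))" using False assms by simp
  ultimately show ?thesis by simp
qed

lemma odd_tog_out: "x \<notin> A \<Longrightarrow> tog x S \<inter> A = S \<inter> A"
  unfolding tog_def by auto

lemma half_pow:
  assumes "finite U" "x \<in> U"
    and P: "\<And>T. T \<subseteq> U \<Longrightarrow> P (tog x T) = (\<not> P T)"
  shows "2 * card {T\<in>Pow U. P T} = card (Pow U)"
  using tog_half[OF assms(1,2), of "\<lambda>_. True" P] P by (simp add: Pow_def)

lemma quarter_pow:
  assumes U: "finite U" and AU: "A \<subseteq> U" and BU: "B \<subseteq> U" and dis: "A \<inter> B = {}"
    and a: "a \<in> A" and b: "b \<in> B"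
  shows "4 * card {S\<in>Pow U. odd (card (S \<inter> A)) \<and> odd (card (S \<inter> B))} = card (Pow U)"
proof -
  have fA: "finite A" "finite B" using U AU BU finite_subset by auto
  have aB: "a \<notin> B" using a dis by auto
  have 1: "2 * card {S\<in>Pow U. odd (card (S \<inter> B)) \<and> odd (card (S \<inter> A))} = card {S\<in>Pow U. odd (card (S \<inter> B))}"
    by (rule tog_half[where x=a]) (use U AU a aB fA in \<open>auto simp: odd_tog_out odd_tog_in\<close>)
  have 2: "2 * card {S\<in>Pow U. odd (card (S \<inter> B))} = card (Pow U)"
    by (rule half_pow[where x=b]) (use U BU b fA in \<open>auto simp: odd_tog_in\<close>)
  have "{S\<in>Pow U. odd (card (S \<inter> A)) \<and> odd (card (S \<inter> B))} = {S\<in>Pow U. odd (card (S \<inter> B)) \<and> odd (card (S \<inter> A))}"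
    by auto
  thus ?thesis using 1 2 by simp
qed

lemma final_count:
  fixes W :: "'a set" and F :: "'a set"
  assumes fW: "finite W" and nW: "W \<noteq> {}" and FW: "F \<subseteq> W" and c: "8 * card F \<le> 7 * card W"
    and G: "PiE {..<9::nat} (\<lambda>_. W) - G \<subseteq> PiE {..<9} (\<lambda>_. F)"
  shows "measure (measure_pmf (pmf_of_set (PiE {..<9::nat} (\<lambda>_. W)))) G \<ge> 2/3"
proof -
  let ?S = "PiE {..<9::nat} (\<lambda>_. W)"
  have fS: "finite ?S" using fW by (simp add: finite_PiE)
  have nS: "?S \<noteq> {}" using nW by (simp add: PiE_eq_empty_iff)
  have fF: "finite F" using fW FW finite_subset by blast
  have cS: "card ?S = card W ^ 9" by (simp add: card_PiE)
  have cF: "card (PiE {..<9::nat} (\<lambda>_. F)) = card F ^ 9" by (simp add: card_PiE)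
  have "card (?S - G) \<le> card F ^ 9"
    using card_mono[OF _ G] cF fF by (simp add: finite_PiE)
  moreover have "card ?S = card (?S \<inter> G) + card (?S - G)"
  proof -
    have "?S = (?S \<inter> G) \<union> (?S - G)" by blast
    moreover have "card ((?S \<inter> G) \<union> (?S - G)) = card (?S \<inter> G) + card (?S - G)"
      by (rule card_Un_disjoint) (use fS in auto)
    ultimately show ?thesis by simp
  qed
  moreover have "(8 * card F) ^ 9 \<le> (7 * card W) ^ 9" using c by (rule power_mono) simp
  hence "134217728 * card F ^ 9 \<le> 40353607 * card W ^ 9" by (simp add: power_mult_distrib)
  ultimately have "3 * card (?S \<inter> G) \<ge> 2 * card ?S" using cS by linarith
  hence "real (card (?S \<inter> G)) / real (card ?S) \<ge> 2/3"
    using nS fS by (simp add: field_simps card_gt_0_iff)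
  thus ?thesis using measure_pmf_of_set[OF nS fS] by simp
qed

definition dec :: "bool list \<Rightarrow> real" where
  "dec bs = (if \<exists>i<9. bs!i \<and> bs!(9+i) then 2 else if \<exists>i<18. bs!i then 1 else 0)"

lemma dec_eval:
  "dec (map (\<lambda>S. chi S X) (map A [0..<9] @ map B [0..<9])) =
    (if \<exists>i<9. chi (A i) X \<and> chi (B i) X then 2 else if \<exists>i<9. chi (A i) X \<or> chi (B i) X then 1 else 0)"
proof -
  let ?bs = "map (\<lambda>S. chi S X) (map A [0..<9] @ map B [0..<9])"
  have n1: "\<And>i. i < 9 \<Longrightarrow> ?bs ! i = chi (A i) X" by (simp add: nth_append)
  have n2: "\<And>i. i < 9 \<Longrightarrow> ?bs ! (9+i) = chi (B i) X" by (simp add: nth_append)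
  have e: "(\<exists>i<18. ?bs!i) \<longleftrightarrow> (\<exists>i<9. chi (A i) X \<or> chi (B i) X)"
  proof
    assume "\<exists>i<18. ?bs!i"
    then obtain i where i: "i < 18" "?bs!i" by blast
    show "\<exists>i<9. chi (A i) X \<or> chi (B i) X"
    proof (cases "i < 9")
      case True thus ?thesis using i n1 by auto
    next
      case False
      define j where "j = i - 9"
      have j: "i = 9 + j" "j < 9" using False i(1) unfolding j_def by auto
      have "chi (B j) X" using i(2) n2[OF j(2)] j(1) by simp
      thus ?thesis using j(2) by blast
    qed
  next
    assume "\<exists>i<9. chi (A i) X \<or> chi (B i) X"
    then obtain i where i: "i < 9" "chi (A i) X \<or> chi (B i) X" by blast
    show "\<exists>i<18. ?bs!i"
    proof (cases "chi (A i) X")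
      case True
      hence "?bs ! i" using n1[OF i(1)] by simp
      moreover have "i < 18" using i(1) by simp
      ultimately show ?thesis by blast
    next
      case False
      hence "?bs ! (9+i)" using n2[OF i(1)] i(2) by simp
      moreover have "9 + i < 18" using i(1) by simp
      ultimately show ?thesis by blast
    qed
  qed
  have e2: "(\<exists>i<9. ?bs!i \<and> ?bs!(9+i)) \<longleftrightarrow> (\<exists>i<9. chi (A i) X \<and> chi (B i) X)"
    using n1 n2 by auto
  show ?thesis unfolding dec_def e e2 ..
qed

definition NL :: "nat \<Rightarrow> nat set set \<Rightarrow> nat set" where
  "NL n I = {e\<in>{1..n}. {e} \<in> I}"
definition par :: "nat set set \<Rightarrow> nat \<Rightarrow> nat \<Rightarrow> bool" where
  "par I e f \<longleftrightarrow> e = f \<or> {e,f} \<notin> I"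
definition rep :: "nat \<Rightarrow> nat set set \<Rightarrow> nat \<Rightarrow> nat" where
  "rep n I e = Min {f \<in> NL n I. par I e f}"

locale rk = fixes n :: nat and I :: "nat set set"
  assumes mat: "matroid n I"
begin

lemma mat_conj: "(\<forall>J\<in>I. J \<subseteq> {1..n}) \<and> {} \<in> I \<and> (\<forall>J K. K \<in> I \<longrightarrow> J \<subseteq> K \<longrightarrow> J \<in> I) \<and>
  (\<forall>J K. J \<in> I \<longrightarrow> K \<in> I \<longrightarrow> card J < card K \<longrightarrow> (\<exists>x\<in>K - J. insert x J \<in> I))"
  using mat unfolding matroid_def .

lemma mat_parts:
  "\<forall>J\<in>I. J \<subseteq> {1..n}" "{} \<in> I" "\<forall>J K. K \<in> I \<longrightarrow> J \<subseteq> K \<longrightarrow> J \<in> I"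
  "\<forall>J K. J \<in> I \<longrightarrow> K \<in> I \<longrightarrow> card J < card K \<longrightarrow> (\<exists>x\<in>K - J. insert x J \<in> I)"
  using mat_conj by simp_all

lemma indep_sub: "J \<in> I \<Longrightarrow> J \<subseteq> {1..n}" using mat_parts(1) by (rule bspec)
lemma indep_down: "J \<in> I \<Longrightarrow> K \<subseteq> J \<Longrightarrow> K \<in> I" using mat_parts(3) by simp
lemma indep_empty: "{} \<in> I" by (rule mat_parts(2))
lemma exch: "J \<in> I \<Longrightarrow> K \<in> I \<Longrightarrow> card J < card K \<Longrightarrow> \<exists>x\<in>K - J. insert x J \<in> I"
  using mat_parts(4) by simp

lemma par_sym: "par I a b \<Longrightarrow> par I b a"
proof -
  have "{a,b} = {b,a}" by (rule insert_commute)
  thus "par I a b \<Longrightarrow> par I b a" unfolding par_def by auto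
qed

lemma par_trans:
  assumes "b \<in> NL n I" "par I a b" "par I b c" shows "par I a c"
proof (rule ccontr)
  assume nac: "\<not> par I a c"
  hence ac: "a \<noteq> c" "{a,c} \<in> I" unfolding par_def by auto
  have ab: "a \<noteq> b" using assms nac by auto
  have bc: "b \<noteq> c" using assms nac by auto
  have nab: "{a,b} \<notin> I" using ab assms(2) unfolding par_def by auto
  have nbc: "{b,c} \<notin> I" using bc assms(3) unfolding par_def by auto
  have bI: "{b} \<in> I" using assms(1) unfolding NL_def by auto
  have "card {b} < card {a,c}" using ac by simp
  from exch[OF bI ac(2) this] obtain x where x: "x \<in> {a,c} - {b}" "insert x {b} \<in> I" by blast
  have cb: "{c,b} = {b,c}" by (rule insert_commute)
  from x(1) have "x = a \<or> x = c" by blast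
  thus False
  proof
    assume "x = a" thus False using x(2) nab by simp
  next
    assume "x = c" thus False using x(2) nbc cb by simp
  qed
qed

lemma rep_props:
  assumes "e \<in> NL n I" shows "rep n I e \<in> NL n I" "par I e (rep n I e)"
proof -
  have fin: "finite {f \<in> NL n I. par I e f}" unfolding NL_def by auto
  have ne: "e \<in> {f \<in> NL n I. par I e f}" using assms unfolding par_def by auto
  have "rep n I e \<in> {f \<in> NL n I. par I e f}" unfolding rep_def using Min_in[OF fin] ne by blast
  thus "rep n I e \<in> NL n I" "par I e (rep n I e)" by auto
qed

lemma rep_eq_iff:
  assumes "e \<in> NL n I" "f \<in> NL n I" shows "rep n I e = rep n I f \<longleftrightarrow> par I e f"
proof
  assume "rep n I e = rep n I f"
  thus "par I e f" using rep_props[OF assms(1)] rep_props[OF assms(2)] par_trans par_sym by metis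
next
  assume p: "par I e f"
  have "{g \<in> NL n I. par I e g} = {g \<in> NL n I. par I f g}"
    using p par_trans par_sym assms by blast
  thus "rep n I e = rep n I f" unfolding rep_def by simp
qed

lemma NL_sub: "NL n I \<subseteq> {1..n}" unfolding NL_def by auto

lemma indep_NL: "J \<in> I \<Longrightarrow> J \<subseteq> NL n I"
proof
  fix e assume "J \<in> I" "e \<in> J"
  thus "e \<in> NL n I" using indep_down[of J "{e}"] indep_sub[of J] unfolding NL_def by auto
qed

lemma fin_fam: "finite {J \<in> I. J \<subseteq> X}"
proof -
  have "{J \<in> I. J \<subseteq> X} \<subseteq> Pow {1..n}" using indep_sub by auto
  thus ?thesis by (rule finite_subset) auto
qed

lemma mrank_ge: "J \<in> I \<Longrightarrow> J \<subseteq> X \<Longrightarrow> card J \<le> mrank I X"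
  unfolding mrank_def by (rule Max_ge) (use fin_fam in auto)

lemma mrank_le: "(\<And>J. J \<in> I \<Longrightarrow> J \<subseteq> X \<Longrightarrow> card J \<le> k) \<Longrightarrow> mrank I X \<le> k"
  unfolding mrank_def by (subst Max_le_iff) (use fin_fam indep_empty in auto)

lemma rank0: "X \<inter> NL n I = {} \<Longrightarrow> mrank I X = 0"
proof -
  assume h: "X \<inter> NL n I = {}"
  have "mrank I X \<le> 0"
  proof (rule mrank_le)
    fix J assume "J \<in> I" "J \<subseteq> X"
    hence "J = {}" using indep_NL h by blast
    thus "card J \<le> 0" by simp
  qed
  thus ?thesis by simp
qed

lemma rank1:
  assumes "e \<in> X \<inter> NL n I" "\<And>a b. a \<in> X \<inter> NL n I \<Longrightarrow> b \<in> X \<inter> NL n I \<Longrightarrow> par I a b"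
  shows "mrank I X = 1"
proof (rule antisym)
  show "mrank I X \<le> 1"
  proof (rule mrank_le)
    fix J assume J: "J \<in> I" "J \<subseteq> X"
    show "card J \<le> 1"
    proof (rule ccontr)
      assume "\<not> card J \<le> 1"
      moreover have fJ: "finite J" using indep_sub J(1) finite_subset by blast
      ultimately obtain a b where ab: "a \<in> J" "b \<in> J" "a \<noteq> b"
        using card_le_Suc0_iff_eq[OF fJ] by auto
      have "{a,b} \<in> I" using indep_down[OF J(1)] ab by auto
      moreover have "par I a b" using assms(2) ab J indep_NL by blast
      ultimately show False using ab unfolding par_def by auto
    qed
  qed
  have "{e} \<in> I" using assms(1) unfolding NL_def by auto
  thus "1 \<le> mrank I X" using mrank_ge[of "{e}" X] assms(1) by auto
qed

lemma rank2:
  assumes r: "mrank I {1..n} = 2" and X: "X \<subseteq> {1..n}"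
    and ab: "a \<in> X" "b \<in> X" "\<not> par I a b"
  shows "mrank I X = 2"
proof (rule antisym)
  show "mrank I X \<le> 2"
  proof (rule mrank_le)
    fix J assume "J \<in> I" "J \<subseteq> X"
    thus "card J \<le> 2" using mrank_ge[of J "{1..n}"] X r by auto
  qed
  have "{a,b} \<in> I" "a \<noteq> b" using ab unfolding par_def by auto
  thus "2 \<le> mrank I X" using mrank_ge[of "{a,b}" X] ab by auto
qed

definition col0 :: "nat set \<Rightarrow> nat set" where
  "col0 T = {e \<in> NL n I. rep n I e \<notin> T}"
definition col1 :: "nat set \<Rightarrow> nat set" where
  "col1 T = {e \<in> NL n I. rep n I e \<in> T}"

abbreviation "W \<equiv> Pow {1..n} \<times> Pow {1..n}"

lemma col_sub: "col0 T \<subseteq> NL n I" "col1 T \<subseteq> NL n I"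
  unfolding col0_def col1_def by auto

lemma trial1:
  assumes X: "X \<subseteq> {1..n}" and e: "e \<in> X \<inter> NL n I"
  shows "8 * card {p \<in> W. \<not> odd (card (snd p \<inter> col0 (fst p) \<inter> X)) \<and> \<not> odd (card (snd p \<inter> col1 (fst p) \<inter> X))} \<le> 7 * card W"
proof -
  let ?U = "{1..n::nat}" and ?Y = "X \<inter> NL n I"
  let ?E = "{S \<in> Pow ?U. \<not> odd (card (S \<inter> ?Y))}"
  have sub: "{p \<in> W. \<not> odd (card (snd p \<inter> col0 (fst p) \<inter> X)) \<and> \<not> odd (card (snd p \<inter> col1 (fst p) \<inter> X))} \<subseteq> Pow ?U \<times> ?E"
  proof
    fix p assume hp: "p \<in> {p \<in> W. \<not> odd (card (snd p \<inter> col0 (fst p) \<inter> X)) \<and> \<not> odd (card (snd p \<inter> col1 (fst p) \<inter> X))}"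
    obtain T S where pTS: "p = (T, S)" by fastforce
    have h: "T \<subseteq> ?U" "S \<subseteq> ?U" "even (card (S \<inter> col0 T \<inter> X))" "even (card (S \<inter> col1 T \<inter> X))"
      using hp pTS by auto
    have un: "S \<inter> ?Y = (S \<inter> col0 T \<inter> X) \<union> (S \<inter> col1 T \<inter> X)" unfolding col0_def col1_def by auto
    have fS: "finite S" by (rule finite_subset[OF h(2)]) simp
    have fin: "finite (S \<inter> col0 T \<inter> X)" "finite (S \<inter> col1 T \<inter> X)" using fS by simp_all
    have "card (S \<inter> ?Y) = card (S \<inter> col0 T \<inter> X) + card (S \<inter> col1 T \<inter> X)"
      unfolding un by (rule card_Un_disjoint) (use fin in \<open>auto simp: col0_def col1_def\<close>)
    thus "p \<in> Pow ?U \<times> ?E" using h pTS by auto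
  qed
  have fY: "finite ?Y" using X finite_subset by blast
  have h2: "2 * card ?E = card (Pow ?U)"
    by (rule half_pow[where x=e]) (use e fY X in \<open>auto simp: odd_tog_in\<close>)
  have "card {p \<in> W. \<not> odd (card (snd p \<inter> col0 (fst p) \<inter> X)) \<and> \<not> odd (card (snd p \<inter> col1 (fst p) \<inter> X))} \<le> card (Pow ?U \<times> ?E)"
    by (rule card_mono[OF _ sub]) auto
  also have "\<dots> = card (Pow ?U) * card ?E" by (rule card_cartesian_product)
  finally have c1: "card {p \<in> W. \<not> odd (card (snd p \<inter> col0 (fst p) \<inter> X)) \<and> \<not> odd (card (snd p \<inter> col1 (fst p) \<inter> X))} \<le> card (Pow ?U) * card ?E" .
  have c2: "8 * (card (Pow ?U) * card ?E) = 4 * (card (Pow ?U) * (2 * card ?E))" by simp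
  have c3: "card (Pow ?U) * (2 * card ?E) = card (Pow ?U) * card (Pow ?U)" by (simp only: h2)
  have c4: "card W = card (Pow ?U) * card (Pow ?U)" by (rule card_cartesian_product)
  show ?thesis using c1 c2 c3 c4 by linarith
qed

lemma trial2:
  assumes X: "X \<subseteq> {1..n}" and a: "a \<in> X \<inter> NL n I" and b: "b \<in> X \<inter> NL n I" and nab: "\<not> par I a b"
  shows "8 * card {p \<in> W. \<not> (odd (card (snd p \<inter> col0 (fst p) \<inter> X)) \<and> odd (card (snd p \<inter> col1 (fst p) \<inter> X)))} \<le> 7 * card W"
proof -
  let ?U = "{1..n::nat}"
  let ?F = "{p \<in> W. \<not> (odd (card (snd p \<inter> col0 (fst p) \<inter> X)) \<and> odd (card (snd p \<inter> col1 (fst p) \<inter> X)))}"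
  let ?G = "{p \<in> W. odd (card (snd p \<inter> col0 (fst p) \<inter> X)) \<and> odd (card (snd p \<inter> col1 (fst p) \<inter> X))}"
  define ra where "ra = rep n I a"
  define rb where "rb = rep n I b"
  have rab: "ra \<noteq> rb" using rep_eq_iff a b nab unfolding ra_def rb_def by auto
  have raU: "ra \<in> ?U" using rep_props(1)[of a] a NL_sub unfolding ra_def by auto
  let ?Ts = "{T \<in> Pow ?U. (ra \<in> T) \<noteq> (rb \<in> T)}"
  let ?Sg = "\<lambda>T. {S \<in> Pow ?U. odd (card (S \<inter> (col0 T \<inter> X))) \<and> odd (card (S \<inter> (col1 T \<inter> X)))}"
  have hT: "2 * card ?Ts = card (Pow ?U)"
    by (rule half_pow[where x=ra]) (use raU rab in \<open>auto simp: tog_def\<close>)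
  have hS: "4 * card (?Sg T) = card (Pow ?U)" if T: "T \<in> ?Ts" for T
  proof -
    have "\<exists>x y. x \<in> col0 T \<inter> X \<and> y \<in> col1 T \<inter> X"
    proof (cases "ra \<in> T")
      case True
      hence "rb \<notin> T" using T by auto
      thus ?thesis using True a b unfolding col0_def col1_def ra_def rb_def by blast
    next
      case False
      hence "rb \<in> T" using T by auto
      thus ?thesis using False a b unfolding col0_def col1_def ra_def rb_def by blast
    qed
    then obtain x y where xy: "x \<in> col0 T \<inter> X" "y \<in> col1 T \<inter> X" by blast
    show ?thesis
      by (rule quarter_pow[OF _ _ _ _ xy]) (use X in \<open>auto simp: col0_def col1_def\<close>)
  qed
  have "Sigma ?Ts ?Sg \<subseteq> ?G" by (auto simp: Int_assoc)
  hence "card (Sigma ?Ts ?Sg) \<le> card ?G" by (intro card_mono) auto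
  moreover have "card (Sigma ?Ts ?Sg) = (\<Sum>T\<in>?Ts. card (?Sg T))" by (rule card_SigmaI) auto
  moreover have "4 * (\<Sum>T\<in>?Ts. card (?Sg T)) = card ?Ts * card (Pow ?U)"
    using hS by (simp add: sum_distrib_left)
  ultimately have g1: "8 * card ?G \<ge> 2 * (card ?Ts * card (Pow ?U))" by linarith
  have e1: "2 * (card ?Ts * card (Pow ?U)) = (2 * card ?Ts) * card (Pow ?U)" by (simp only: mult.assoc)
  have e2: "(2 * card ?Ts) * card (Pow ?U) = card (Pow ?U) * card (Pow ?U)" by (simp only: hT)
  have "8 * card ?G \<ge> card (Pow ?U) * card (Pow ?U)" using g1 e1 e2 by linarith
  moreover have "card W = card ?F + card ?G"
  proof -
    have "W = ?F \<union> ?G" by auto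
    moreover have "card (?F \<union> ?G) = card ?F + card ?G" by (rule card_Un_disjoint) auto
    ultimately show ?thesis by simp
  qed
  moreover have "card W = card (Pow ?U) * card (Pow ?U)" by (rule card_cartesian_product)
  ultimately show ?thesis by linarith
qed

definition sk :: "(nat \<Rightarrow> nat set \<times> nat set) \<Rightarrow> nat set list" where
  "sk \<sigma> = map (\<lambda>i. snd (\<sigma> i) \<inter> col0 (fst (\<sigma> i))) [0..<9] @ map (\<lambda>i. snd (\<sigma> i) \<inter> col1 (fst (\<sigma> i))) [0..<9]"

lemma main:
  assumes r: "mrank I {1..n} = 2"
  shows "has_sketch n (1/3) (\<lambda>X. real (mrank I X)) 18"
proof -
  let ?U = "{1..n::nat}"
  let ?Sp = "PiE {..<9::nat} (\<lambda>_. W)"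
  have fS: "finite ?Sp" by (simp add: finite_PiE)
  have nS: "?Sp \<noteq> {}" by (simp add: PiE_eq_empty_iff) (metis Pow_bottom empty_iff)
  define D where "D = map_pmf sk (pmf_of_set ?Sp)"
  have c1: "\<forall>Ss\<in>set_pmf D. length Ss = 18 \<and> (\<forall>S\<in>set Ss. S \<subseteq> ?U)"
  proof
    fix Ss assume "Ss \<in> set_pmf D"
    then obtain \<sigma> where "Ss = sk \<sigma>" unfolding D_def using fS nS by auto
    thus "length Ss = 18 \<and> (\<forall>S\<in>set Ss. S \<subseteq> ?U)"
    proof -
      have cu: "x \<in> col0 T \<Longrightarrow> x \<in> ?U" "x \<in> col1 T \<Longrightarrow> x \<in> ?U" for x T
        using col_sub NL_sub by blast+
      show ?thesis using \<open>Ss = sk \<sigma>\<close> unfolding sk_def by (auto dest: cu)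
    qed
  qed
  have c2: "measure_pmf.prob D {Ss. dec (map (\<lambda>S. chi S X) Ss) = real (mrank I X)} \<ge> 1 - 1/3"
    if X: "X \<subseteq> ?U" for X
  proof -
    let ?A = "\<lambda>\<sigma> i. chi (snd (\<sigma> i) \<inter> col0 (fst (\<sigma> i))) X"
    let ?B = "\<lambda>\<sigma> i. chi (snd (\<sigma> i) \<inter> col1 (fst (\<sigma> i))) X"
    define G where "G = {\<sigma>. dec (map (\<lambda>S. chi S X) (sk \<sigma>)) = real (mrank I X)}"
    have ev: "dec (map (\<lambda>S. chi S X) (sk \<sigma>)) = (if \<exists>i<9. ?A \<sigma> i \<and> ?B \<sigma> i then 2 else if \<exists>i<9. ?A \<sigma> i \<or> ?B \<sigma> i then 1 else 0)" for \<sigma>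
      unfolding sk_def by (rule dec_eval)
    have PiE_mem: "\<sigma> \<in> PiE {..<9::nat} (\<lambda>_. F)" if "\<sigma> \<in> ?Sp" "\<And>i. i < 9 \<Longrightarrow> \<sigma> i \<in> F" for \<sigma> F
      using that by (auto simp: PiE_iff)
    have "measure (measure_pmf (pmf_of_set ?Sp)) G \<ge> 2/3"
    proof (cases "X \<inter> NL n I = {}")
      case True
      have rk0: "mrank I X = 0" using rank0[OF True] .
      have "\<sigma> \<in> G" for \<sigma>
      proof -
        have "\<not> ?A \<sigma> i" "\<not> ?B \<sigma> i" for i
        proof -
          have "snd (\<sigma> i) \<inter> col0 (fst (\<sigma> i)) \<inter> X = {}" "snd (\<sigma> i) \<inter> col1 (fst (\<sigma> i)) \<inter> X = {}"
            using True col_sub[of "fst (\<sigma> i)"] by blast+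
          thus "\<not> ?A \<sigma> i" "\<not> ?B \<sigma> i" unfolding chi_def by simp_all
        qed
        thus ?thesis unfolding G_def using ev rk0 by simp
      qed
      thus ?thesis by (intro final_count[where F="{}"]) auto
    next
      case False
      then obtain e where e: "e \<in> X \<inter> NL n I" by blast
      show ?thesis
      proof (cases "\<exists>a\<in>X \<inter> NL n I. \<exists>b\<in>X \<inter> NL n I. \<not> par I a b")
        case True
        then obtain a b where ab: "a \<in> X \<inter> NL n I" "b \<in> X \<inter> NL n I" "\<not> par I a b" by blast
        have rk2: "mrank I X = 2" using rank2[OF r X, of a b] ab by auto
        let ?F = "{p \<in> W. \<not> (odd (card (snd p \<inter> col0 (fst p) \<inter> X)) \<and> odd (card (snd p \<inter> col1 (fst p) \<inter> X)))}"
        show ?thesis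
        proof (rule final_count[where F="?F"])
          show "8 * card ?F \<le> 7 * card W" by (rule trial2[OF X ab])
          show "?Sp - G \<subseteq> PiE {..<9} (\<lambda>_. ?F)"
          proof
            fix \<sigma> assume s: "\<sigma> \<in> ?Sp - G"
            have nG: "dec (map (\<lambda>S. chi S X) (sk \<sigma>)) \<noteq> 2" using s rk2 unfolding G_def by simp
            have nb: "\<not> (?A \<sigma> i \<and> ?B \<sigma> i)" if "i < 9" for i
            proof
              assume "?A \<sigma> i \<and> ?B \<sigma> i"
              hence "\<exists>i<9. ?A \<sigma> i \<and> ?B \<sigma> i" using that by blast
              hence "dec (map (\<lambda>S. chi S X) (sk \<sigma>)) = 2" by (simp only: ev if_True)
              thus False using nG by simp
            qed
            have s1: "\<sigma> \<in> ?Sp" using s by blast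
            have inW: "\<sigma> i \<in> W" if "i < 9" for i using s1 that by (simp add: PiE_iff)
            show "\<sigma> \<in> PiE {..<9} (\<lambda>_. ?F)"
              by (rule PiE_mem[OF s1]) (use nb inW in \<open>simp add: chi_def\<close>)
          qed
        qed auto
      next
        case False
        hence allp: "\<And>a b. a \<in> X \<inter> NL n I \<Longrightarrow> b \<in> X \<inter> NL n I \<Longrightarrow> par I a b" by blast
        have rk1: "mrank I X = 1" using rank1[OF e allp] by blast
        have noboth: "\<not> (?A \<sigma> i \<and> ?B \<sigma> i)" for \<sigma> i
        proof
          assume h: "?A \<sigma> i \<and> ?B \<sigma> i"
          hence "snd (\<sigma> i) \<inter> col0 (fst (\<sigma> i)) \<inter> X \<noteq> {}" "snd (\<sigma> i) \<inter> col1 (fst (\<sigma> i)) \<inter> X \<noteq> {}"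
            unfolding chi_def by (metis card.empty even_zero)+
          then obtain x y where x: "x \<in> col0 (fst (\<sigma> i)) \<inter> X" and y: "y \<in> col1 (fst (\<sigma> i)) \<inter> X" by blast
          have xN: "x \<in> NL n I" and yN: "y \<in> NL n I" using x y col_sub by blast+
          have "rep n I x = rep n I y" using rep_eq_iff[OF xN yN] allp x y xN yN by blast
          thus False using x y unfolding col0_def col1_def by auto
        qed
        let ?F = "{p \<in> W. \<not> odd (card (snd p \<inter> col0 (fst p) \<inter> X)) \<and> \<not> odd (card (snd p \<inter> col1 (fst p) \<inter> X))}"
        show ?thesis
        proof (rule final_count[where F="?F"])
          show "8 * card ?F \<le> 7 * card W" by (rule trial1[OF X e])
          show "?Sp - G \<subseteq> PiE {..<9} (\<lambda>_. ?F)"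
          proof
            fix \<sigma> assume s: "\<sigma> \<in> ?Sp - G"
            have nG: "dec (map (\<lambda>S. chi S X) (sk \<sigma>)) \<noteq> 1" using s rk1 unfolding G_def by simp
            have nb: "\<not> ?A \<sigma> i \<and> \<not> ?B \<sigma> i" if "i < 9" for i
            proof (rule ccontr)
              assume "\<not> (\<not> ?A \<sigma> i \<and> \<not> ?B \<sigma> i)"
              hence "\<exists>i<9. ?A \<sigma> i \<or> ?B \<sigma> i" using that by blast
              moreover have "\<not> (\<exists>i<9. ?A \<sigma> i \<and> ?B \<sigma> i)" using noboth[of \<sigma>] by blast
              ultimately have "dec (map (\<lambda>S. chi S X) (sk \<sigma>)) = 1" by (simp only: ev if_True if_False)
              thus False using nG by simp
            qed
            have s1: "\<sigma> \<in> ?Sp" using s by blast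
            have inW: "\<sigma> i \<in> W" if "i < 9" for i using s1 that by (simp add: PiE_iff)
            show "\<sigma> \<in> PiE {..<9} (\<lambda>_. ?F)"
              by (rule PiE_mem[OF s1]) (use nb inW in \<open>simp add: chi_def\<close>)
          qed
        qed auto
      qed
    qed
    moreover have "measure_pmf.prob D {Ss. dec (map (\<lambda>S. chi S X) Ss) = real (mrank I X)} = measure (measure_pmf (pmf_of_set ?Sp)) G"
    proof -
      have vE: "sk -` {Ss. dec (map (\<lambda>S. chi S X) Ss) = real (mrank I X)} = G"
        unfolding G_def by (simp only: vimage_Collect_eq)
      show ?thesis unfolding D_def by (simp only: measure_map_pmf vE)
    qed
    ultimately show ?thesis by linarith
  qed
  show ?thesis unfolding has_sketch_def
    apply (rule exI[where x=D])
    apply (rule exI[where x=dec])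
    apply (rule conjI)
     apply (rule c1)
    apply (intro allI impI)
    apply (rule c2)
    apply assumption
    done
qed

end

theorem theorem1:
  shows "\<exists>C::nat. \<forall>n::nat. \<forall>\<I>::nat set set.
           matroid n \<I> \<and> mrank \<I> {1..n} = 2 \<longrightarrow>
           sketch_complexity n (1/3) (\<lambda>X. real (mrank \<I> X)) \<le> C"
proof (intro exI allI impI)
  fix n :: nat and J :: "nat set set"
  assume h: "matroid n J \<and> mrank J {1..n} = 2"
  interpret rk n J by (rule rk.intro) (rule conjunct1[OF h])
  have "has_sketch n (1/3) (\<lambda>X. real (mrank J X)) 18" using main[OF conjunct2[OF h]] .
  thus "sketch_complexity n (1/3) (\<lambda>X. real (mrank J X)) \<le> 18"
    unfolding sketch_complexity_def by (rule Least_le)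
qed

end
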